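(* Let $d\ge2$, $n\ge1$, $\gamma$ a positive conductivity on the lattice graph below, and $d\le t\le dn-1$. Then $\ker T_1^{(t-1)}\subseteq\ker T_1^{(t)}$, where $\mathbb R^{J_{t-1}^{\mathcal S}}$ is regarded as a subspace of $\mathbb R^{J_t^{\mathcal S}}$ via extension by zero.
   Context: Lattice: $D=\{x\in\mathbb Z^d:1\le x_i\le n\ \forall i\}$, $\partial D=\{p\in\mathbb Z^d:\min_{q\in D}\|q-p\|_{\ell^1}=1\}$; $E$ = unordered pairs $pq\subseteq D\cup\partial D$ with $\|p-q\|_{\ell^1}=1$, not both in $\partial D$; $\mathcal N(p)=\{q:pq\in E\}$. Conductivity $\gamma:E\to(0,\infty)$, symmetric. $S_\gamma\varphi$ is the unique $\mathbf u\in\mathbb R^{D\cup\partial D}$ with $\sum_{q\in\mathcal N(p)}\gamma_{pq}(\mathbf u_q-\mathbf u_p)=0$ for all $p\in D$ and $\mathbf u=\varphi$ on $\partial D$. Functions on subsets are extended by zero. With $s(x)=\sum_ix_i$: $L_t=\{x\in D:s(x)=t\}$, $K_t^+=\{x\in\partial D:s(x)=t,\max_ix_i=n+1\}$, $K_t^-=\{x\in\partial D:s(x)=t,\min_ix_i=0\}$, $K_t^{\mathcal S\pm}=\bigcup_{\ell\le t}K_\ell^\pm$, $J_t^{\mathcal S}=K_t^{\mathcal S-}\cup K_{t+1}^{\mathcal S+}$. $T_1^{(t)}:\mathbb R^{J_t^{\mathcal S}}\to\mathbb R^{L_{t+1}}$, $\varphi\mapsto(S_\gamma\varphi)|_{L_{t+1}}$.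 *)

theory Defs
  imports "HOL-Analysis.Analysis"
begin

text \<open>Points of Z^d are integer lists of length d.\<close>

definition l1dist :: "int list \<Rightarrow> int list \<Rightarrow> int" where
  "l1dist p q = (\<Sum>i<length p. \<bar>p ! i - q ! i\<bar>)"

definition Dom :: "nat \<Rightarrow> nat \<Rightarrow> int list set" where
  "Dom d n = {x. length x = d \<and> (\<forall>i<d. 1 \<le> x ! i \<and> x ! i \<le> int n)}"

definition bdry :: "nat \<Rightarrow> nat \<Rightarrow> int list set" where
  "bdry d n = {p. length p = d \<and> Min ((\<lambda>q. l1dist q p) ` Dom d n) = 1}"

definition Edges :: "nat \<Rightarrow> nat \<Rightarrow> int list set set" where
  "Edges d n = {{p, q} | p q. p \<in> Dom d n \<union> bdry d n \<and> q \<in> Dom d n \<union> bdry d n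
      \<and> l1dist p q = 1 \<and> \<not> (p \<in> bdry d n \<and> q \<in> bdry d n)}"

definition nbhd :: "nat \<Rightarrow> nat \<Rightarrow> int list \<Rightarrow> int list set" where
  "nbhd d n p = {q. {p, q} \<in> Edges d n}"

definition solveS :: "nat \<Rightarrow> nat \<Rightarrow> (int list set \<Rightarrow> real) \<Rightarrow> (int list \<Rightarrow> real) \<Rightarrow> (int list \<Rightarrow> real)" where
  "solveS d n \<gamma> \<phi> = (THE u.
      (\<forall>p \<in> Dom d n. (\<Sum>q \<in> nbhd d n p. \<gamma> {p, q} * (u q - u p)) = 0)
    \<and> (\<forall>p \<in> bdry d n. u p = \<phi> p)
    \<and> (\<forall>p. p \<notin> Dom d n \<union> bdry d n \<longrightarrow> u p = 0))"

definition ssum :: "int list \<Rightarrow> int" where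
  "ssum x = sum_list x"

definition Lset :: "nat \<Rightarrow> nat \<Rightarrow> int \<Rightarrow> int list set" where
  "Lset d n t = {x \<in> Dom d n. ssum x = t}"

definition Kplus :: "nat \<Rightarrow> nat \<Rightarrow> int \<Rightarrow> int list set" where
  "Kplus d n t = {x \<in> bdry d n. ssum x = t \<and> Max (set x) = int n + 1}"

definition Kminus :: "nat \<Rightarrow> nat \<Rightarrow> int \<Rightarrow> int list set" where
  "Kminus d n t = {x \<in> bdry d n. ssum x = t \<and> Min (set x) = 0}"

definition KSplus :: "nat \<Rightarrow> nat \<Rightarrow> int \<Rightarrow> int list set" where
  "KSplus d n t = (\<Union>l \<in> {l. l \<le> t}. Kplus d n l)"

definition KSminus :: "nat \<Rightarrow> nat \<Rightarrow> int \<Rightarrow> int list set" where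
  "KSminus d n t = (\<Union>l \<in> {l. l \<le> t}. Kminus d n l)"

definition JS :: "nat \<Rightarrow> nat \<Rightarrow> int \<Rightarrow> int list set" where
  "JS d n t = KSminus d n t \<union> KSplus d n (t + 1)"

text \<open>T_1^(t) : R^(J_t) -> R^(L_(t+1)); functions on subsets are extended by zero.\<close>
definition T1 :: "nat \<Rightarrow> nat \<Rightarrow> (int list set \<Rightarrow> real) \<Rightarrow> int \<Rightarrow> (int list \<Rightarrow> real) \<Rightarrow> (int list \<Rightarrow> real)" where
  "T1 d n \<gamma> t \<phi> = (\<lambda>x. if x \<in> Lset d n (t + 1) then solveS d n \<gamma> \<phi> x else 0)"

definition kerT1 :: "nat \<Rightarrow> nat \<Rightarrow> (int list set \<Rightarrow> real) \<Rightarrow> int \<Rightarrow> (int list \<Rightarrow> real) set" where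
  "kerT1 d n \<gamma> t = {\<phi>. (\<forall>x. x \<notin> JS d n t \<longrightarrow> \<phi> x = 0) \<and> T1 d n \<gamma> t \<phi> = (\<lambda>_. 0)}"

end

theory Submission
  imports Defs "HOL-Library.Function_Algebras"
begin


lemma lin_surj:
  fixes F :: "('a \<Rightarrow> real) \<Rightarrow> ('a \<Rightarrow> real)" and D :: "'a set"
  assumes finD: "finite D"
    and add: "\<And>v w. F (v + w) = F v + F w"
    and scl: "\<And>c v. F (\<lambda>x. c * v x) = (\<lambda>x. c * F v x)"
    and supp: "\<And>v x. x \<notin> D \<Longrightarrow> F v x = 0"
    and inj: "\<And>v. (\<forall>x. x \<notin> D \<longrightarrow> v x = 0) \<Longrightarrow> F v = 0 \<Longrightarrow> v = 0"
    and b: "\<forall>x. x \<notin> D \<longrightarrow> b x = 0"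
  shows "\<exists>v. (\<forall>x. x \<notin> D \<longrightarrow> v x = 0) \<and> F v = b"
proof -
  define sc :: "real \<Rightarrow> ('a \<Rightarrow> real) \<Rightarrow> ('a \<Rightarrow> real)" where "sc = (\<lambda>c v x. c * v x)"
  interpret vs: vector_space sc
    by unfold_locales (auto simp: sc_def fun_eq_iff algebra_simps)
  interpret lf: Vector_Spaces.linear sc sc F
    by unfold_locales (auto simp: sc_def add scl)
  define V where "V = {v::'a\<Rightarrow>real. \<forall>x. x \<notin> D \<longrightarrow> v x = 0}"
  define \<delta> where "\<delta> = (\<lambda>a::'a. (\<lambda>y. if y = a then 1 else 0::real))"
  define E where "E = \<delta> ` D"
  have finE: "finite E" using finD by (simp add: E_def)
  have injd: "inj_on \<delta> D" by (auto simp: inj_on_def \<delta>_def fun_eq_iff)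
  have subV: "vs.subspace V"
    unfolding vs.subspace_def V_def by (auto simp: sc_def)
  have EV: "E \<subseteq> V" by (auto simp: E_def V_def \<delta>_def)
  have spanV: "vs.span E \<subseteq> V" using vs.span_minimal[OF EV subV] .
  have V_span: "V \<subseteq> vs.span E"
  proof
    fix v assume "v \<in> V"
    have sa: "\<And>x (G::'a\<Rightarrow>'a\<Rightarrow>real) (A::'a set). (\<Sum>a\<in>A. G a) x = (\<Sum>a\<in>A. G a x)"
      subgoal for x G A by (induct A rule: infinite_finite_induct) auto
      done
    have "v = (\<Sum>a\<in>D. sc (v a) (\<delta> a))"
      using \<open>v \<in> V\<close> finD by (auto simp: fun_eq_iff sc_def \<delta>_def V_def sa if_distrib cong: if_cong)
    also have "\<dots> \<in> vs.span E"
      by (intro vs.span_sum vs.span_scale vs.span_base) (auto simp: E_def)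
    finally show "v \<in> vs.span E" .
  qed
  have indE: "vs.independent E"
  proof
    assume "vs.dependent E"
    then obtain e where e: "e \<in> E" "e \<in> vs.span (E - {e})" unfolding vs.dependent_def by blast
    then obtain a where a: "a \<in> D" "e = \<delta> a" by (auto simp: E_def)
    have sub2: "vs.subspace {f. f a = 0}"
      unfolding vs.subspace_def by (auto simp: sc_def)
    have "E - {e} \<subseteq> {f. f a = 0}" using a by (auto simp: E_def \<delta>_def)
    then have "vs.span (E - {e}) \<subseteq> {f. f a = 0}" using vs.span_minimal[OF _ sub2] by blast
    with e a show False by (auto simp: \<delta>_def)
  qed
  have injF: "inj_on F (vs.span E)"
  proof (rule inj_onI)
    fix u w assume uw: "u \<in> vs.span E" "w \<in> vs.span E" "F u = F w"
    have Fuw: "F (u - w) = 0" using uw(3) lf.diff by simp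
    have u0: "u x = 0" if "x \<notin> D" for x
    proof -
      have "u \<in> V" using uw(1) spanV by (rule subsetD[rotated])
      then show ?thesis using that unfolding V_def by simp
    qed
    have w0: "w x = 0" if "x \<notin> D" for x
    proof -
      have "w \<in> V" using uw(2) spanV by (rule subsetD[rotated])
      then show ?thesis using that unfolding V_def by simp
    qed
    have "\<forall>x. x \<notin> D \<longrightarrow> (u - w) x = 0" using u0 w0 by simp
    then have "u - w = 0" using inj Fuw by metis
    then show "u = w" by simp
  qed
  have indFE: "vs.independent (F ` E)"
    using lf.independent_injective_image[OF indE injF] .
  have cardFE: "card (F ` E) = card E"
    using card_image[OF inj_on_subset[OF injF vs.span_superset]] .
  have FEsub: "F ` E \<subseteq> vs.span E"
    using V_span supp by (auto simp: V_def)
  have bV: "b \<in> vs.span E" using b V_span by (auto simp: V_def)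
  have "b \<in> vs.span (F ` E)"
  proof (rule ccontr)
    assume nb: "b \<notin> vs.span (F ` E)"
    have "vs.independent (insert b (F ` E))" using vs.independent_insertI[OF nb indFE] .
    moreover have "insert b (F ` E) \<subseteq> vs.span E" using bV FEsub by blast
    ultimately have "card (insert b (F ` E)) \<le> card E"
      using vs.independent_span_bound[OF finE] by simp
    moreover have "b \<notin> F ` E" using nb vs.span_base by blast
    ultimately show False using cardFE finE by simp
  qed
  then have "b \<in> F ` vs.span E" using lf.span_image by simp
  then obtain v where "v \<in> vs.span E" "F v = b" by blast
  then show ?thesis using spanV by (auto simp: V_def)
qed

lemma maxp:
  fixes A :: "'a set" and nb :: "'a \<Rightarrow> 'a set" and g :: "'a \<Rightarrow> 'a \<Rightarrow> real"
    and w :: "'a \<Rightarrow> real" and f :: "'a \<Rightarrow> int"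
  assumes finA: "finite A" and finN: "\<And>p. p \<in> A \<Longrightarrow> finite (nb p)"
    and gpos: "\<And>p q. p \<in> A \<Longrightarrow> q \<in> nb p \<Longrightarrow> g p q > 0"
    and harm: "\<And>p. p \<in> A \<Longrightarrow> (\<Sum>q\<in>nb p. g p q * (w q - w p)) = 0"
    and out: "\<And>p q. p \<in> A \<Longrightarrow> q \<in> nb p \<Longrightarrow> q \<notin> A \<Longrightarrow> w q = 0"
    and esc: "\<And>p. p \<in> A \<Longrightarrow> \<exists>q\<in>nb p. q \<notin> A \<or> f p < f q"
    and pA: "p \<in> A"
  shows "w p \<le> 0"
proof (rule ccontr)
  assume np: "\<not> w p \<le> 0"
  define M where "M = Max (w ` A)"
  have wM: "\<And>q. q \<in> A \<Longrightarrow> w q \<le> M" using finA by (simp add: M_def)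
  have Mpos: "M > 0" using wM[OF pA] np by simp
  have "M \<in> w ` A" using finA pA unfolding M_def by (intro Max_in) auto
  define S where "S = {q\<in>A. w q = M}"
  have finS: "finite S" "S \<noteq> {}" using finA \<open>M \<in> w ` A\<close> by (auto simp: S_def)
  define m where "m = Max (f ` S)"
  have "m \<in> f ` S" using finS unfolding m_def by (intro Max_in) auto
  then obtain p0 where p0: "p0 \<in> S" "f p0 = m" by blast
  have fm: "\<And>q. q \<in> S \<Longrightarrow> f q \<le> m" using finS by (simp add: m_def)
  have p0A: "p0 \<in> A" and wp0: "w p0 = M" using p0 by (auto simp: S_def)
  have le: "0 \<le> - (g p0 q * (w q - w p0))" if q: "q \<in> nb p0" for q
  proof -
    have "w q \<le> M" using wM out[OF p0A q] Mpos by (cases "q \<in> A") auto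
    then show ?thesis using gpos[OF p0A q] wp0 by (simp add: mult_nonneg_nonpos)
  qed
  have S0: "(\<Sum>q\<in>nb p0. - (g p0 q * (w q - w p0))) = 0"
    using harm[OF p0A] by (simp add: sum_negf)
  have H: "(\<Sum>q\<in>nb p0. - (g p0 q * (w q - w p0))) = 0 \<longleftrightarrow> (\<forall>q\<in>nb p0. - (g p0 q * (w q - w p0)) = 0)"
    by (rule sum_nonneg_eq_0_iff[OF finN[OF p0A]]) (rule le)
  have all0: "\<forall>q\<in>nb p0. - (g p0 q * (w q - w p0)) = 0"
    using H[THEN iffD1, OF S0] .
  have eqM: "w q = M" if "q \<in> nb p0" for q
  proof -
    have "g p0 q * (w q - w p0) = 0" using all0 that by simp
    then have "w q - w p0 = 0" using gpos[OF p0A that] by simp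
    then show ?thesis using wp0 by simp
  qed
  obtain q where q: "q \<in> nb p0" "q \<notin> A \<or> f p0 < f q" using esc[OF p0A] by blast
  show False
  proof (cases "q \<in> A")
    case True
    then have "q \<in> S" using eqM[OF q(1)] by (simp add: S_def)
    then have "f q \<le> f p0" using fm p0(2) by simp
    then show False using q(2) True by simp
  next
    case False
    then show False using out[OF p0A q(1) False] eqM[OF q(1)] Mpos by simp
  qed
qed

lemma maxp0:
  fixes A :: "'a set" and nb :: "'a \<Rightarrow> 'a set" and g :: "'a \<Rightarrow> 'a \<Rightarrow> real"
    and w :: "'a \<Rightarrow> real" and f :: "'a \<Rightarrow> int"
  assumes finA: "finite A" and finN: "\<And>p. p \<in> A \<Longrightarrow> finite (nb p)"
    and gpos: "\<And>p q. p \<in> A \<Longrightarrow> q \<in> nb p \<Longrightarrow> g p q > 0"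
    and harm: "\<And>p. p \<in> A \<Longrightarrow> (\<Sum>q\<in>nb p. g p q * (w q - w p)) = 0"
    and out: "\<And>p q. p \<in> A \<Longrightarrow> q \<in> nb p \<Longrightarrow> q \<notin> A \<Longrightarrow> w q = 0"
    and esc: "\<And>p. p \<in> A \<Longrightarrow> \<exists>q\<in>nb p. q \<notin> A \<or> f p < f q"
    and pA: "p \<in> A"
  shows "w p = 0"
proof -
  have "w p \<le> 0" by (rule maxp[OF assms])
  moreover have "- w p \<le> 0"
  proof (rule maxp[of A nb g "\<lambda>x. - w x" f, OF finA finN gpos _ _ esc pA])
    fix p assume "p \<in> A"
    have "(\<Sum>q\<in>nb p. g p q * (- w q - - w p)) = - (\<Sum>q\<in>nb p. g p q * (w q - w p))"
      by (simp add: sum_negf[symmetric] algebra_simps)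
    then show "(\<Sum>q\<in>nb p. g p q * (- w q - - w p)) = 0" using harm[OF \<open>p \<in> A\<close>] by simp
  qed (use out in auto)
  ultimately show ?thesis by simp
qed



lemma l1dist_sym: "length p = length q \<Longrightarrow> l1dist p q = l1dist q p"
  by (simp add: l1dist_def abs_minus_commute)

lemma l1dist_nonneg: "0 \<le> l1dist p q"
  by (simp add: l1dist_def sum_nonneg)

lemma l1dist_self: "l1dist p p = 0"
  by (simp add: l1dist_def)

lemma l1dist_zero: assumes "length p = length q" "l1dist p q = 0" shows "p = q"
proof -
  have "\<forall>i\<in>{..<length p}. \<bar>p ! i - q ! i\<bar> = 0"
    using assms(2) sum_nonneg_eq_0_iff[of "{..<length p}" "\<lambda>i. \<bar>p ! i - q ! i\<bar>"]
    by (simp add: l1dist_def)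
  then show ?thesis using assms(1) by (intro nth_equalityI) auto
qed

lemma l1dist_upd: assumes "i < length p" shows "l1dist p (p[i := x]) = \<bar>p ! i - x\<bar>"
proof -
  have "l1dist p (p[i := x]) = (\<Sum>j<length p. if j = i then \<bar>p ! i - x\<bar> else 0)"
    unfolding l1dist_def by (intro sum.cong) (auto simp: nth_list_update)
  also have "\<dots> = \<bar>p ! i - x\<bar>" using assms by (simp add: sum.delta)
  finally show ?thesis .
qed

lemma l1dist_one:
  assumes len: "length p = length q" and d1: "l1dist p q = 1"
  shows "\<exists>i<length p. q = p[i := p ! i + 1] \<or> q = p[i := p ! i - 1]"
proof -
  have "p \<noteq> q" using d1 l1dist_self by auto
  then obtain i where i: "i < length p" "p ! i \<noteq> q ! i" using len nth_equalityI by blast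
  have "l1dist p q = \<bar>p ! i - q ! i\<bar> + (\<Sum>j\<in>{..<length p} - {i}. \<bar>p ! j - q ! j\<bar>)"
    unfolding l1dist_def using i by (simp add: sum.remove)
  moreover have "0 \<le> (\<Sum>j\<in>{..<length p} - {i}. \<bar>p ! j - q ! j\<bar>)" by (simp add: sum_nonneg)
  moreover have "\<bar>p ! i - q ! i\<bar> \<ge> 1" using i(2) by linarith
  ultimately have a1: "\<bar>p ! i - q ! i\<bar> = 1" and r0: "(\<Sum>j\<in>{..<length p} - {i}. \<bar>p ! j - q ! j\<bar>) = 0"
    using d1 by linarith+
  have eqj: "p ! j = q ! j" if "j < length p" "j \<noteq> i" for j
    using r0 sum_nonneg_eq_0_iff[of "{..<length p} - {i}" "\<lambda>j. \<bar>p ! j - q ! j\<bar>"] that by auto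
  have "q = p[i := q ! i]" using eqj len i(1) by (intro nth_equalityI) (auto simp: nth_list_update)
  moreover have "q ! i = p ! i + 1 \<or> q ! i = p ! i - 1" using a1 by linarith
  ultimately show ?thesis using i(1) by metis
qed

lemma ssum_upd: "i < length p \<Longrightarrow> ssum (p[i := x]) = ssum p + x - p ! i"
  unfolding ssum_def by (induct p arbitrary: i) (auto split: nat.split)

lemma finite_Dom: "finite (Dom d n)"
proof -
  have "Dom d n \<subseteq> {x. set x \<subseteq> {1..int n} \<and> length x = d}"
    by (auto simp: Dom_def in_set_conv_nth)
  then show ?thesis using finite_lists_length_eq[of "{1..int n}" d] finite_subset by blast
qed

lemma len_DB: "x \<in> Dom d n \<union> bdry d n \<Longrightarrow> length x = d"
  by (auto simp: Dom_def bdry_def)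

lemma Dom_not_bdry: assumes "p \<in> Dom d n" shows "p \<notin> bdry d n"
proof -
  have "Min ((\<lambda>q. l1dist q p) ` Dom d n) = 0"
  proof (rule Min_eqI)
    show "0 \<in> (\<lambda>q. l1dist q p) ` Dom d n" using assms by (intro image_eqI[where x=p]) (auto simp: l1dist_self)
  qed (auto simp: finite_Dom l1dist_nonneg)
  then show ?thesis by (simp add: bdry_def)
qed

lemma bdryI:
  assumes "length q = d" "q \<notin> Dom d n" "p \<in> Dom d n" "l1dist p q = 1"
  shows "q \<in> bdry d n"
proof -
  have "Min ((\<lambda>r. l1dist r q) ` Dom d n) = 1"
  proof (rule Min_eqI)
    show "finite ((\<lambda>r. l1dist r q) ` Dom d n)" using finite_Dom by simp
    show "1 \<in> (\<lambda>r. l1dist r q) ` Dom d n" using assms(3,4) by force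
    fix y assume "y \<in> (\<lambda>r. l1dist r q) ` Dom d n"
    then obtain r where r: "r \<in> Dom d n" "y = l1dist r q" by blast
    have "r \<noteq> q" using r assms(2) by auto
    then have "l1dist r q \<noteq> 0" using l1dist_zero[of r q] r(1) assms(1) by (auto simp: Dom_def)
    then show "1 \<le> y" using r(2) l1dist_nonneg[of r q] by linarith
  qed
  then show ?thesis using assms(1) by (simp add: bdry_def)
qed

lemma Edges_iff:
  "{p, q} \<in> Edges d n \<longleftrightarrow> p \<in> Dom d n \<union> bdry d n \<and> q \<in> Dom d n \<union> bdry d n
     \<and> l1dist p q = 1 \<and> \<not> (p \<in> bdry d n \<and> q \<in> bdry d n)"
proof
  assume "{p, q} \<in> Edges d n"
  then obtain p' q' where e: "{p, q} = {p', q'}" "p' \<in> Dom d n \<union> bdry d n" "q' \<in> Dom d n \<union> bdry d n"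
      "l1dist p' q' = 1" "\<not> (p' \<in> bdry d n \<and> q' \<in> bdry d n)"
    unfolding Edges_def by blast
  have "length p' = length q'" using e(2,3) len_DB by metis
  then show "p \<in> Dom d n \<union> bdry d n \<and> q \<in> Dom d n \<union> bdry d n
     \<and> l1dist p q = 1 \<and> \<not> (p \<in> bdry d n \<and> q \<in> bdry d n)"
    using e l1dist_sym[of p' q'] by (auto simp: doubleton_eq_iff)
next
  assume "p \<in> Dom d n \<union> bdry d n \<and> q \<in> Dom d n \<union> bdry d n
     \<and> l1dist p q = 1 \<and> \<not> (p \<in> bdry d n \<and> q \<in> bdry d n)"
  then show "{p, q} \<in> Edges d n" unfolding Edges_def by blast
qed

lemma nbhd_D: "p \<in> Dom d n \<Longrightarrow> q \<in> nbhd d n p \<longleftrightarrow> q \<in> Dom d n \<union> bdry d n \<and> l1dist p q = 1"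
  using Dom_not_bdry[of p d n] by (auto simp: nbhd_def Edges_iff)

lemma nbhd_form:
  assumes "p \<in> Dom d n" "q \<in> nbhd d n p"
  shows "\<exists>i<d. q = p[i := p ! i + 1] \<or> q = p[i := p ! i - 1]"
proof -
  have "q \<in> Dom d n \<union> bdry d n" "l1dist p q = 1" using assms nbhd_D by auto
  moreover have "length p = d" using assms(1) by (simp add: Dom_def)
  ultimately show ?thesis using l1dist_one[of p q] len_DB[of q d n] by auto
qed

lemma nbhd_fin: assumes "p \<in> Dom d n" shows "finite (nbhd d n p)"
proof -
  have "nbhd d n p \<subseteq> (\<lambda>i. p[i := p ! i + 1]) ` {..<d} \<union> (\<lambda>i. p[i := p ! i - 1]) ` {..<d}"
    using nbhd_form[OF assms] by blast
  then show ?thesis by (rule finite_subset) simp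
qed

lemma esc_geom:
  assumes "p \<in> Dom d n" "0 < d"
  shows "p[0 := p ! 0 + 1] \<in> nbhd d n p"
proof -
  let ?q = "p[0 := p ! 0 + 1]"
  have lp: "length p = d" using assms(1) by (simp add: Dom_def)
  have dist: "l1dist p ?q = 1" using l1dist_upd[of 0 p] lp assms(2) by simp
  have "?q \<in> Dom d n \<union> bdry d n"
  proof (cases "?q \<in> Dom d n")
    case False
    then show ?thesis using bdryI[of ?q d n p] lp dist assms(1) by simp
  qed simp
  then show ?thesis using nbhd_D[OF assms(1)] dist by simp
qed



definition harmP :: "nat \<Rightarrow> nat \<Rightarrow> (int list set \<Rightarrow> real) \<Rightarrow> (int list \<Rightarrow> real) \<Rightarrow> (int list \<Rightarrow> real) \<Rightarrow> bool" where
  "harmP d n \<gamma> \<phi> u \<longleftrightarrow>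
      (\<forall>p \<in> Dom d n. (\<Sum>q \<in> nbhd d n p. \<gamma> {p, q} * (u q - u p)) = 0)
    \<and> (\<forall>p \<in> bdry d n. u p = \<phi> p)
    \<and> (\<forall>p. p \<notin> Dom d n \<union> bdry d n \<longrightarrow> u p = 0)"

lemma zero_principle:
  fixes \<gamma> :: "int list set \<Rightarrow> real" and w :: "int list \<Rightarrow> real"
  assumes d0: "0 < d" and gam: "\<forall>e \<in> Edges d n. \<gamma> e > 0"
    and AD: "A \<subseteq> Dom d n"
    and harm: "\<And>p. p \<in> A \<Longrightarrow> (\<Sum>q \<in> nbhd d n p. \<gamma> {p, q} * (w q - w p)) = 0"
    and out: "\<And>p q. p \<in> A \<Longrightarrow> q \<in> nbhd d n p \<Longrightarrow> q \<notin> A \<Longrightarrow> w q = 0"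
    and escA: "\<And>p. p \<in> A \<Longrightarrow> p[0 := p ! 0 + 1] \<in> Dom d n \<Longrightarrow> p[0 := p ! 0 + 1] \<in> A"
    and pA: "p \<in> A"
  shows "w p = 0"
proof (rule maxp0[of A "nbhd d n" "\<lambda>p q. \<gamma> {p, q}" w "\<lambda>p. p ! 0"])
  show "finite A" using AD finite_Dom finite_subset by blast
  show "finite (nbhd d n p)" if "p \<in> A" for p using nbhd_fin that AD by blast
  show "0 < \<gamma> {p, q}" if "p \<in> A" "q \<in> nbhd d n p" for p q using gam that by (simp add: nbhd_def)
  show "\<exists>q\<in>nbhd d n p. q \<notin> A \<or> p ! 0 < q ! 0" if "p \<in> A" for p
  proof -
    have pD: "p \<in> Dom d n" using that AD by blast
    have l: "length p = d" using pD by (simp add: Dom_def)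
    let ?q = "p[0 := p ! 0 + 1]"
    have "?q \<in> nbhd d n p" using esc_geom[OF pD d0] .
    moreover have "?q \<notin> A \<or> p ! 0 < ?q ! 0" using l d0 by simp
    ultimately show ?thesis by blast
  qed
qed (use harm out pA in auto)

lemma solve_exists:
  assumes d0: "0 < d" and gam: "\<forall>e \<in> Edges d n. \<gamma> e > 0"
  shows "\<exists>u. harmP d n \<gamma> \<phi> u"
proof -
  define F where "F = (\<lambda>v p. if p \<in> Dom d n then (\<Sum>q \<in> nbhd d n p. \<gamma> {p, q} * (v q - v p)) else (0::real))"
  define \<phi>' where "\<phi>' = (\<lambda>x. if x \<in> bdry d n then \<phi> x else 0)"
  define b where "b = (\<lambda>p. - F \<phi>' p)"
  have "\<exists>v. (\<forall>x. x \<notin> Dom d n \<longrightarrow> v x = 0) \<and> F v = b"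
  proof (rule lin_surj[OF finite_Dom])
    show "F (v + w) = F v + F w" for v w
      by (auto simp: F_def fun_eq_iff sum.distrib[symmetric] algebra_simps)
    show "F (\<lambda>x. c * v x) = (\<lambda>x. c * F v x)" for c v
      by (auto simp: F_def fun_eq_iff sum_distrib_left algebra_simps)
    show "F v x = 0" if "x \<notin> Dom d n" for v x using that by (simp add: F_def)
    show "\<forall>x. x \<notin> Dom d n \<longrightarrow> b x = 0" by (simp add: b_def F_def)
    show "v = 0" if v0: "\<forall>x. x \<notin> Dom d n \<longrightarrow> v x = 0" and Fv: "F v = 0" for v
    proof
      fix x
      show "v x = 0 x"
      proof (cases "x \<in> Dom d n")
        case True
        show ?thesis
        proof -
          have "v x = 0"
          proof (rule zero_principle[OF d0 gam order_refl])
            show "(\<Sum>q \<in> nbhd d n p. \<gamma> {p, q} * (v q - v p)) = 0" if "p \<in> Dom d n" for p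
              using fun_cong[OF Fv, of p] that by (simp add: F_def)
          qed (use v0 True in auto)
          then show ?thesis by simp
        qed
      qed (use v0 in simp)
    qed
  qed
  then obtain v where v0: "\<forall>x. x \<notin> Dom d n \<longrightarrow> v x = 0" and Fv: "F v = b" by blast
  define u where "u = (\<lambda>x. \<phi>' x + v x)"
  have "F u = F \<phi>' + F v"
    by (auto simp: u_def F_def fun_eq_iff sum.distrib[symmetric] algebra_simps)
  then have Fu: "F u = 0" using Fv by (simp add: b_def fun_eq_iff)
  have "harmP d n \<gamma> \<phi> u"
    unfolding harmP_def
  proof (intro conjI ballI allI impI)
    fix p assume "p \<in> Dom d n"
    then show "(\<Sum>q \<in> nbhd d n p. \<gamma> {p, q} * (u q - u p)) = 0"
      using fun_cong[OF Fu, of p] by (simp add: F_def)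
  next
    fix p assume "p \<in> bdry d n"
    then show "u p = \<phi> p" using v0 Dom_not_bdry[of p d n] by (auto simp: u_def \<phi>'_def)
  next
    fix p assume "p \<notin> Dom d n \<union> bdry d n"
    then show "u p = 0" using v0 by (simp add: u_def \<phi>'_def)
  qed
  then show ?thesis by blast
qed

lemma solve_unique:
  assumes d0: "0 < d" and gam: "\<forall>e \<in> Edges d n. \<gamma> e > 0"
    and u1: "harmP d n \<gamma> \<phi> u1" and u2: "harmP d n \<gamma> \<phi> u2"
  shows "u1 = u2"
proof
  fix x
  define w where "w = (\<lambda>x. u1 x - u2 x)"
  show "u1 x = u2 x"
  proof (cases "x \<in> Dom d n")
    case True
    have "w x = 0"
    proof (rule zero_principle[OF d0 gam order_refl _ _ _ True])
      fix p assume "p \<in> Dom d n"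
      then have "(\<Sum>q \<in> nbhd d n p. \<gamma> {p, q} * (u1 q - u1 p)) - (\<Sum>q \<in> nbhd d n p. \<gamma> {p, q} * (u2 q - u2 p)) = 0"
        using u1 u2 by (simp add: harmP_def)
      then show "(\<Sum>q \<in> nbhd d n p. \<gamma> {p, q} * (w q - w p)) = 0"
        by (simp add: w_def sum_subtractf[symmetric] algebra_simps)
    next
      fix p q assume "p \<in> Dom d n" "q \<in> nbhd d n p" "q \<notin> Dom d n"
      then have "q \<in> bdry d n" using nbhd_D by blast
      then show "w q = 0" using u1 u2 by (simp add: harmP_def w_def)
    qed simp
    then show ?thesis by (simp add: w_def)
  next
    case False
    then show ?thesis using u1 u2 by (cases "x \<in> bdry d n") (auto simp: harmP_def)
  qed
qed

lemma solveS_prop: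
  assumes d0: "0 < d" and gam: "\<forall>e \<in> Edges d n. \<gamma> e > 0"
  shows "harmP d n \<gamma> \<phi> (solveS d n \<gamma> \<phi>)"
proof -
  have "\<exists>!u. harmP d n \<gamma> \<phi> u"
    using solve_exists[OF d0 gam] solve_unique[OF d0 gam] by blast
  then have "harmP d n \<gamma> \<phi> (THE u. harmP d n \<gamma> \<phi> u)" by (rule theI')
  then show ?thesis unfolding solveS_def harmP_def .
qed


lemma entries_le:
  assumes "p \<in> Dom d n" "i < d" "j < d"
  shows "p[i := p ! i - 1] ! j \<le> int n"
  using assms by (cases "j = i") (auto simp: Dom_def nth_list_update)

theorem proposition2p3:
  fixes d n :: nat and \<gamma> :: "int list set \<Rightarrow> real" and t :: int
  assumes "d \<ge> 2" and "n \<ge> 1"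
    and "\<forall>e \<in> Edges d n. \<gamma> e > 0"
    and "int d \<le> t" and "t \<le> int d * int n - 1"
  shows "kerT1 d n \<gamma> (t - 1) \<subseteq> kerT1 d n \<gamma> t"
proof
  fix \<phi> assume "\<phi> \<in> kerT1 d n \<gamma> (t - 1)"
  then have supp: "\<And>x. x \<notin> JS d n (t - 1) \<Longrightarrow> \<phi> x = 0"
    and T0: "T1 d n \<gamma> (t - 1) \<phi> = (\<lambda>_. 0)" by (auto simp: kerT1_def)
  have d0: "0 < d" using assms(1) by simp
  have gam: "\<forall>e \<in> Edges d n. \<gamma> e > 0" by fact
  define u where "u = solveS d n \<gamma> \<phi>"
  have P: "harmP d n \<gamma> \<phi> u" unfolding u_def by (rule solveS_prop[OF d0 gam])
  have uL: "u y = 0" if "y \<in> Lset d n t" for y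
    using fun_cong[OF T0, of y] that by (simp add: T1_def u_def)
  have JSsub: "JS d n (t - 1) \<subseteq> JS d n t"
    by (auto simp: JS_def KSminus_def KSplus_def)
  define A where "A = {x \<in> Dom d n. ssum x > t}"
  have uA: "u x = 0" if "x \<in> A" for x
  proof (rule zero_principle[OF d0 gam, of A])
    show "A \<subseteq> Dom d n" by (auto simp: A_def)
    show "x \<in> A" by fact
    show "(\<Sum>q \<in> nbhd d n p. \<gamma> {p, q} * (u q - u p)) = 0" if "p \<in> A" for p
      using P that by (simp add: harmP_def A_def)
    show "p[0 := p ! 0 + 1] \<in> A" if "p \<in> A" "p[0 := p ! 0 + 1] \<in> Dom d n" for p
    proof -
      have "length p = d" using that(1) by (simp add: A_def Dom_def)
      then have "ssum (p[0 := p ! 0 + 1]) = ssum p + 1" using d0 by (simp add: ssum_upd)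
      then show ?thesis using that by (simp add: A_def)
    qed
    show "u q = 0" if pA: "p \<in> A" and qn: "q \<in> nbhd d n p" and qA: "q \<notin> A" for p q
    proof -
      have pD: "p \<in> Dom d n" and sp: "ssum p > t" using pA by (auto simp: A_def)
      have lp: "length p = d" using pD by (simp add: Dom_def)
      have qDB: "q \<in> Dom d n \<union> bdry d n" using nbhd_D[OF pD] qn by blast
      obtain i where i: "i < d" and qf: "q = p[i := p ! i + 1] \<or> q = p[i := p ! i - 1]"
        using nbhd_form[OF pD qn] by blast
      have sq: "ssum q = ssum p + 1 \<or> (q = p[i := p ! i - 1] \<and> ssum q = ssum p - 1)"
        using qf i lp by (auto simp: ssum_upd)
      show ?thesis
      proof (cases "q \<in> Dom d n")
        case True
        then have "ssum q \<le> t" using qA by (auto simp: A_def)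
        then have "ssum q = t" using sq sp by auto
        then show ?thesis using uL True by (simp add: Lset_def)
      next
        case False
        then have qB: "q \<in> bdry d n" using qDB by blast
        have "q \<notin> JS d n (t - 1)"
        proof
          assume "q \<in> JS d n (t - 1)"
          then consider (m) l where "l \<le> t - 1" "q \<in> Kminus d n l"
            | (p) l where "l \<le> t" "q \<in> Kplus d n l"
            by (auto simp: JS_def KSminus_def KSplus_def)
          then show False
          proof cases
            case m
            then show False using sq sp by (auto simp: Kminus_def)
          next
            case p
            then have mx: "Max (set q) = int n + 1" and sl: "ssum q \<le> t" by (auto simp: Kplus_def)
            then have qm: "q = p[i := p ! i - 1]" using sq sp by auto
            have lq: "length q = d" using qm lp by simp
            have "set q \<noteq> {}" using lq d0 by auto
            then have "Max (set q) \<in> set q" by (intro Max_in) auto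
            then obtain j where j: "j < d" "q ! j = Max (set q)" using lq by (auto simp: in_set_conv_nth)
            have "q ! j \<le> int n" using entries_le[OF pD i j(1)] qm by simp
            then show False using j(2) mx by simp
          qed
        qed
        then have "\<phi> q = 0" using supp by blast
        then show ?thesis using P qB by (simp add: harmP_def)
      qed
    qed
  qed
  show "\<phi> \<in> kerT1 d n \<gamma> t"
    unfolding kerT1_def
  proof (intro CollectI conjI allI impI)
    fix x assume "x \<notin> JS d n t"
    then show "\<phi> x = 0" using supp JSsub by blast
  next
    show "T1 d n \<gamma> t \<phi> = (\<lambda>_. 0)"
    proof
      fix x
      show "T1 d n \<gamma> t \<phi> x = 0"
      proof (cases "x \<in> Lset d n (t + 1)")
        case True
        then have "x \<in> A" by (auto simp: A_def Lset_def)
        then show ?thesis using uA True by (simp add: T1_def u_def)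
      qed (simp add: T1_def)
    qed
  qed
qed

end
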